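(* Let $A\ge0$ and let $c:[a,b]\times S^1\to\mathbb R^2$ be a smooth horizontal path of immersions ($\langle c_t,c_\theta\rangle\equiv0$), and write $c_t=a\,ic_\theta/|c_\theta|$ with $a$ a smooth real function. Then $c$ satisfies the geodesic equation $$\big((1+A\kappa^2)|c_\theta|c_t\big)_t=\Big(\frac{-1+A\kappa^2}{2}\frac{|c_t|^2}{|c_\theta|}c_\theta+A\frac{(\kappa|c_t|^2)_\theta}{|c_\theta|^2}ic_\theta\Big)_\theta$$ if and only if $$\big((1+A\kappa^2)a\big)_t=\frac{1+3A\kappa^2}{2}\,\kappa a^2+A(\kappa a^2)_{ss},$$ where $f_s:=f_\theta/|c_\theta|$ denotes the arclength derivative. Moreover, along any such horizontal path, $|c_\theta|_t=-a\kappa|c_\theta|$.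
   Context: $S^1=\mathbb R/2\pi\mathbb Z$, $\mathbb R^2\cong\mathbb C$. Subscripts $t,\theta$ are partial derivatives. $\kappa=\kappa_{c(t)}=\det(c_\theta,c_{\theta\theta})/|c_\theta|^3$. *)

theory Defs
  imports "HOL-Analysis.Analysis"
begin

text \<open>Functions on [t0,t1] x R (the circle S^1 = R/2piZ is represented by 2pi-periodic
functions in theta). Curves in R^2 are complex-valued.\<close>

definition Dt :: "real \<Rightarrow> real \<Rightarrow> (real \<Rightarrow> real \<Rightarrow> 'b::real_normed_vector) \<Rightarrow> real \<Rightarrow> real \<Rightarrow> 'b" where
  "Dt t0 t1 f t \<theta> = vector_derivative (\<lambda>s. f s \<theta>) (at t within {t0..t1})"

definition Dth :: "(real \<Rightarrow> real \<Rightarrow> 'b::real_normed_vector) \<Rightarrow> real \<Rightarrow> real \<Rightarrow> 'b" where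
  "Dth f t \<theta> = vector_derivative (\<lambda>\<phi>. f t \<phi>) (at \<theta>)"

fun dpart :: "real \<Rightarrow> real \<Rightarrow> bool list \<Rightarrow> (real \<Rightarrow> real \<Rightarrow> 'b::real_normed_vector) \<Rightarrow> real \<Rightarrow> real \<Rightarrow> 'b" where
  "dpart t0 t1 [] f = f"
| "dpart t0 t1 (True # w) f = Dt t0 t1 (dpart t0 t1 w f)"
| "dpart t0 t1 (False # w) f = Dth (dpart t0 t1 w f)"

definition smooth_on_strip :: "real \<Rightarrow> real \<Rightarrow> (real \<Rightarrow> real \<Rightarrow> 'b::real_normed_vector) \<Rightarrow> bool" where
  "smooth_on_strip t0 t1 f \<longleftrightarrow>
     (\<forall>w. continuous_on ({t0..t1} \<times> UNIV) (\<lambda>(t,\<theta>). dpart t0 t1 w f t \<theta>) \<and>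
          (\<forall>t\<in>{t0..t1}. \<forall>\<theta>.
              (\<lambda>s. dpart t0 t1 w f s \<theta>) differentiable (at t within {t0..t1}) \<and>
              (\<lambda>\<phi>. dpart t0 t1 w f t \<phi>) differentiable (at \<theta>)))"

definition periodic_theta :: "(real \<Rightarrow> real \<Rightarrow> 'b) \<Rightarrow> bool" where
  "periodic_theta f \<longleftrightarrow> (\<forall>t \<theta>. f t (\<theta> + 2*pi) = f t \<theta>)"

definition det2 :: "complex \<Rightarrow> complex \<Rightarrow> real" where
  "det2 u v = Re u * Im v - Im u * Re v"

definition curv :: "(real \<Rightarrow> real \<Rightarrow> complex) \<Rightarrow> real \<Rightarrow> real \<Rightarrow> real" where
  "curv c t \<theta> = det2 (Dth c t \<theta>) (Dth (Dth c) t \<theta>) / norm (Dth c t \<theta>) ^ 3"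

definition Ds :: "(real \<Rightarrow> real \<Rightarrow> complex) \<Rightarrow> (real \<Rightarrow> real \<Rightarrow> real) \<Rightarrow> real \<Rightarrow> real \<Rightarrow> real" where
  "Ds c f t \<theta> = Dth f t \<theta> / norm (Dth c t \<theta>)"

end

theory Submission
  imports Defs
begin


lemma dpart_th:
  assumes "smooth_on_strip t0 t1 f" "t \<in> {t0..t1}"
  shows "((\<lambda>\<phi>. dpart t0 t1 w f t \<phi>) has_vector_derivative dpart t0 t1 (False#w) f t \<phi>) (at \<phi>)"
  using assms unfolding smooth_on_strip_def
  by (auto simp: Dth_def intro!: vector_derivative_works[THEN iffD1])

lemma dpart_t:
  assumes "smooth_on_strip t0 t1 f" "t \<in> {t0..t1}"
  shows "((\<lambda>s. dpart t0 t1 w f s \<theta>) has_vector_derivative dpart t0 t1 (True#w) f t \<theta>) (at t within {t0..t1})"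
  using assms unfolding smooth_on_strip_def
  by (auto simp: Dt_def intro!: vector_derivative_works[THEN iffD1])

lemma dpart_cont:
  assumes "smooth_on_strip t0 t1 f"
  shows "continuous_on ({t0..t1} \<times> UNIV) (\<lambda>(t,\<theta>). dpart t0 t1 w f t \<theta>)"
  using assms unfolding smooth_on_strip_def by auto

lemma dpart_cont_t:
  assumes "smooth_on_strip t0 t1 f"
  shows "continuous_on {t0..t1} (\<lambda>s. dpart t0 t1 w f s \<theta>)"
proof -
  have "continuous_on {t0..t1} ((\<lambda>(t,\<theta>). dpart t0 t1 w f t \<theta>) \<circ> (\<lambda>s. (s,\<theta>)))"
    by (rule continuous_on_compose) (auto intro!: continuous_intros continuous_on_subset[OF dpart_cont[OF assms]])
  then show ?thesis by (simp add: o_def)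
qed

lemma schwarz:
  fixes f :: "real \<Rightarrow> real \<Rightarrow> 'b::banach"
  assumes sm: "smooth_on_strip t0 t1 f" and lt: "t0 < t1" and t: "t \<in> {t0..t1}"
  shows "Dt t0 t1 (Dth f) t \<theta> = Dth (Dt t0 t1 f) t \<theta>"
proof -
  define g where "g = dpart t0 t1 [True] f"
  define h where "h = dpart t0 t1 [False,True] f"
  have A: "f t' \<phi> - f t0 \<phi> = integral {t0..t'} (\<lambda>s. g s \<phi>)" if "t' \<in> {t0..t1}" for t' \<phi>
  proof -
    have "((\<lambda>s. g s \<phi>) has_integral (f t' \<phi> - f t0 \<phi>)) {t0..t'}"
    proof (rule fundamental_theorem_of_calculus)
      show "t0 \<le> t'" using that by auto
      fix x assume x: "x \<in> {t0..t'}"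
      then have "x \<in> {t0..t1}" using that by auto
      from dpart_t[OF sm this, of "[]" \<phi>] have "((\<lambda>s. f s \<phi>) has_vector_derivative g x \<phi>) (at x within {t0..t1})"
        unfolding g_def by simp
      then show "((\<lambda>s. f s \<phi>) has_vector_derivative g x \<phi>) (at x within {t0..t'})"
        by (rule has_vector_derivative_within_subset) (use that in auto)
    qed
    then show ?thesis by (simp add: integral_unique)
  qed
  have B: "((\<lambda>\<phi>. integral {t0..t'} (\<lambda>s. g s \<phi>)) has_vector_derivative integral {t0..t'} (\<lambda>s. h s \<phi>)) (at \<phi>)"
    if "t' \<in> {t0..t1}" for t' \<phi>
  proof -
    have sub: "cbox t0 t' \<subseteq> {t0..t1}" using that by auto
    have "((\<lambda>\<phi>. integral (cbox t0 t') (\<lambda>s. g s \<phi>)) has_vector_derivative integral (cbox t0 t') (\<lambda>s. h s \<phi>)) (at \<phi> within UNIV)"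
    proof (rule leibniz_rule_vector_derivative)
      fix x s assume "x \<in> (UNIV::real set)" "s \<in> cbox t0 t'"
      then have "s \<in> {t0..t1}" using sub by auto
      from dpart_th[OF sm this, of "[True]" x] show "((\<lambda>x. g s x) has_vector_derivative h s x) (at x within UNIV)"
        unfolding g_def h_def by simp
    next
      fix x :: real
      show "(\<lambda>s. g s x) integrable_on cbox t0 t'"
        using continuous_on_subset[OF dpart_cont_t[OF sm, of "[True]" x] sub] by (intro integrable_continuous) (simp add: g_def)
    next
      have "continuous_on (UNIV \<times> cbox t0 t') ((\<lambda>(t,\<theta>). dpart t0 t1 [False,True] f t \<theta>) \<circ> (\<lambda>(x,s). (s,x)))"
      proof (rule continuous_on_compose)
        show "continuous_on (UNIV \<times> cbox t0 t') (\<lambda>(x::real, s::real). (s, x))"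
          by (auto intro!: continuous_intros simp: split_beta)
        have img: "(\<lambda>(x::real,s::real). (s,x)) ` (UNIV \<times> cbox t0 t') \<subseteq> {t0..t1} \<times> UNIV" using sub by auto
        show "continuous_on ((\<lambda>(x, s). (s, x)) ` (UNIV \<times> cbox t0 t')) (\<lambda>(t, \<theta>). dpart t0 t1 [False, True] f t \<theta>)"
          by (rule continuous_on_subset[OF dpart_cont[OF sm] img])
      qed
      then show "continuous_on (UNIV \<times> cbox t0 t') (\<lambda>(x, s). h s x)"
        by (simp add: h_def o_def split_beta)
    qed auto
    then show ?thesis by simp
  qed
  have C: "Dth f t' \<phi> = Dth f t0 \<phi> + integral {t0..t'} (\<lambda>s. h s \<phi>)" if "t' \<in> {t0..t1}" for t' \<phi>
  proof -
    have t0in: "t0 \<in> {t0..t1}" using lt by auto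
    have "((\<lambda>\<phi>. f t0 \<phi> + integral {t0..t'} (\<lambda>s. g s \<phi>)) has_vector_derivative Dth f t0 \<phi> + integral {t0..t'} (\<lambda>s. h s \<phi>)) (at \<phi>)"
      apply (rule has_vector_derivative_add)
      using dpart_th[OF sm t0in, of "[]" \<phi>] B[OF that, of \<phi>] by simp_all
    moreover have "(\<lambda>\<phi>. f t0 \<phi> + integral {t0..t'} (\<lambda>s. g s \<phi>)) = (\<lambda>\<phi>. f t' \<phi>)"
      by (rule ext) (simp add: A[OF that, symmetric])
    ultimately show ?thesis by (simp add: Dth_def vector_derivative_at)
  qed
  have "((\<lambda>s. Dth f t0 \<theta> + integral {t0..s} (\<lambda>s. h s \<theta>)) has_vector_derivative h t \<theta>) (at t within {t0..t1})"
    using has_vector_derivative_add[OF has_vector_derivative_const integral_has_vector_derivative[OF dpart_cont_t[OF sm, of "[False,True]" \<theta>] t]]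
    by (simp add: h_def)
  then have "((\<lambda>s. Dth f s \<theta>) has_vector_derivative h t \<theta>) (at t within {t0..t1})"
    by (rule has_vector_derivative_transform[OF t, rotated]) (erule C)
  then have "vector_derivative (\<lambda>s. Dth f s \<theta>) (at t within {t0..t1}) = h t \<theta>"
    using vector_derivative_within_cbox[of t0 t1 t] lt t by auto
  then show ?thesis by (simp add: Dt_def h_def)
qed



lemma norm_deriv:
  fixes f :: "real \<Rightarrow> complex"
  assumes d: "(f has_vector_derivative f') (at x within S)" and nz: "f x \<noteq> 0"
  shows "((\<lambda>x. norm (f x)) has_real_derivative (Re (f x) * Re f' + Im (f x) * Im f') / norm (f x)) (at x within S)"
proof -
  have pos: "Re (f x)^2 + Im (f x)^2 > 0" using nz
    by (metis complex_eq_0 add_pos_nonneg add_nonneg_pos not_less_iff_gr_or_eq zero_less_power2 zero_le_power2)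
  have eq: "(\<lambda>x. norm (f x)) = (\<lambda>x. sqrt (Re (f x)^2 + Im (f x)^2))"
    by (simp add: cmod_def)
  define r where "r = sqrt (Re (f x)^2 + Im (f x)^2)"
  have D: "((\<lambda>x. sqrt (Re (f x)^2 + Im (f x)^2)) has_real_derivative
      inverse r / 2 * (2 * Re (f x) * Re f' + 2 * Im (f x) * Im f')) (at x within S)"
    unfolding r_def using d pos by (auto intro!: derivative_eq_intros DERIV_real_sqrt simp: )
  have s: "r > 0" using pos by (simp add: r_def)
  have nr: "norm (f x) = r" by (simp add: r_def cmod_def)
  have E: "inverse r / 2 * (2 * Re (f x) * Re f' + 2 * Im (f x) * Im f') = (Re (f x) * Re f' + Im (f x) * Im f') / norm (f x)"
    using s unfolding nr by (simp add: field_simps)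
  from DERIV_cong[OF D E] show ?thesis unfolding eq .
qed

lemma det2_deriv:
  fixes p q :: "real \<Rightarrow> complex"
  assumes dp: "(p has_vector_derivative p') (at x within S)" and dq: "(q has_vector_derivative q') (at x within S)"
  shows "((\<lambda>x. det2 (p x) (q x)) has_real_derivative det2 p' (q x) + det2 (p x) q') (at x within S)"
proof -
  have "((\<lambda>x. Re (p x) * Im (q x) - Im (p x) * Re (q x)) has_real_derivative
     Re (p x) * Im q' + Re p' * Im (q x) - (Im (p x) * Re q' + Im p' * Re (q x))) (at x within S)"
    using dp dq by (auto intro!: derivative_eq_intros)
  moreover have "Re (p x) * Im q' + Re p' * Im (q x) - (Im (p x) * Re q' + Im p' * Re (q x)) = det2 p' (q x) + det2 (p x) q'"
    by (simp add: det2_def algebra_simps)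
  ultimately show ?thesis unfolding det2_def by simp
qed

lemma curv_deriv:
  fixes p q :: "real \<Rightarrow> complex"
  assumes dp: "(p has_vector_derivative p') (at x within S)" and dq: "(q has_vector_derivative q') (at x within S)"
    and nz: "p x \<noteq> 0"
  shows "((\<lambda>x. det2 (p x) (q x) / norm (p x) ^ 3) has_real_derivative
    ((det2 p' (q x) + det2 (p x) q') * norm (p x) - 3 * det2 (p x) (q x) * ((Re (p x) * Re p' + Im (p x) * Im p') / norm (p x))) / norm (p x) ^ 4) (at x within S)"
proof -
  define V where "V = norm (p x)"
  define V1 where "V1 = (Re (p x) * Re p' + Im (p x) * Im p') / norm (p x)"
  have Vp: "V > 0" using nz by (simp add: V_def)
  have dn: "((\<lambda>x. norm (p x)) has_real_derivative V1) (at x within S)"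
    unfolding V1_def by (rule norm_deriv[OF dp nz])
  have dn3: "((\<lambda>x. norm (p x) ^ 3) has_real_derivative of_nat 3 * (V1 * norm (p x) ^ (3 - Suc 0))) (at x within S)"
    by (rule DERIV_power[OF dn])
  have dq3: "((\<lambda>x. det2 (p x) (q x) / norm (p x) ^ 3) has_real_derivative
     ((det2 p' (q x) + det2 (p x) q') * norm (p x) ^ 3 - det2 (p x) (q x) * (of_nat 3 * (V1 * norm (p x) ^ (3 - Suc 0)))) / (norm (p x) ^ 3 * norm (p x) ^ 3)) (at x within S)"
    by (rule DERIV_divide[OF det2_deriv[OF dp dq] dn3]) (use nz in simp)
  have E: "((det2 p' (q x) + det2 (p x) q') * norm (p x) ^ 3 - det2 (p x) (q x) * (of_nat 3 * (V1 * norm (p x) ^ (3 - Suc 0)))) / (norm (p x) ^ 3 * norm (p x) ^ 3)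
     = ((det2 p' (q x) + det2 (p x) q') * norm (p x) - 3 * det2 (p x) (q x) * V1) / norm (p x) ^ 4"
    using Vp unfolding V_def[symmetric] by (simp add: field_simps power2_eq_square power3_eq_cube power4_eq_xxxx)
  from DERIV_cong[OF dq3 E] show ?thesis unfolding V1_def .
qed



lemma Qdecomp:
  fixes P Q :: complex
  assumes P: "P \<noteq> 0"
  shows "Q = of_real ((Re P * Re Q + Im P * Im Q) / norm P / norm P) * P + of_real (det2 P Q / norm P ^ 3 * norm P) * \<i> * P"
proof -
  have n2: "norm P ^ 2 = Re P ^ 2 + Im P ^ 2" by (simp add: cmod_def)
  have np: "norm P > 0" using P by simp
  have e1: "det2 P Q / norm P ^ 3 * norm P = det2 P Q / norm P ^ 2" using np by (simp add: field_simps power2_eq_square power3_eq_cube)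
  have e2: "(Re P * Re Q + Im P * Im Q) / norm P / norm P = (Re P * Re Q + Im P * Im Q) / norm P ^ 2" by (simp add: power2_eq_square)
  have d: "Im P * Im P + Re P * Re P \<noteq> 0"
  proof -
    have "norm P * norm P > 0" using np by simp
    moreover have "norm P * norm P = Im P * Im P + Re P * Re P" using n2 by (simp add: power2_eq_square)
    ultimately show ?thesis by linarith
  qed
  have d': "Re P * Re P + Im P * Im P \<noteq> 0" using d by (simp add: add.commute)
  have r1: "Re Q = ((Re P * Re Q + Im P * Im Q) * Re P - (Re P * Im Q - Im P * Re Q) * Im P) / (Re P * Re P + Im P * Im P)"
    using d' by (simp add: eq_divide_eq algebra_simps)
  have r2: "Im Q = ((Re P * Re Q + Im P * Im Q) * Im P + (Re P * Im Q - Im P * Re Q) * Re P) / (Re P * Re P + Im P * Im P)"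
    using d' by (simp add: eq_divide_eq algebra_simps)
  show ?thesis unfolding e1 e2 n2
    by (simp add: complex_eq_iff det2_def power2_eq_square add_divide_distrib[symmetric] d) (use r1 r2 in auto)
qed

lemma lincomb_eq:
  fixes P :: complex
  assumes "P \<noteq> 0"
  shows "(of_real a * P + of_real b * \<i> * P = of_real c * P + of_real d * \<i> * P) \<longleftrightarrow> (a = c \<and> b = d)"
proof -
  have "of_real a * P + of_real b * \<i> * P = Complex a b * P"
    by (simp add: complex_eq_iff)
  moreover have "of_real c * P + of_real d * \<i> * P = Complex c d * P"
    by (simp add: complex_eq_iff)
  ultimately show ?thesis using assms by simp
qed

lemma alg_main:
  fixes P Q :: complex and V V1 k k1 al al1 M1 M2 Bt A :: real
  assumes P: "P \<noteq> 0" and V: "V \<noteq> 0"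
    and Qd: "Q = of_real (V1 / V) * P + of_real (k * V) * \<i> * P"
    and M1: "M1 = k1 * al^2 + k * (2 * al * al1)"
  shows "(of_real Bt * \<i> * P + of_real ((1 + A*k^2) * al) * \<i> *
            (of_real ((al1 * V - al * V1) / V^2) * \<i> * P + of_real (al / V) * \<i> * Q) =
          of_real (((A*(2*k*k1))/2 * al^2 + (-1+A*k^2)/2 * (2*al*al1)) / V - (-1+A*k^2)/2*al^2 * V1 / V^2) * P
          + of_real ((-1 + A*k^2)/2 * al^2 / V) * Q
          + of_real (A * M2 / V^2 - A * M1 * (2*V*V1) / V^4) * \<i> * P
          + of_real (A * M1 / V^2) * \<i> * Q)
        \<longleftrightarrow> Bt = (1 + 3*A*k^2)/2 * k * al^2 + A * (((M2 * V - M1 * V1)/V^2) / V)"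
    (is "?L = ?R \<longleftrightarrow> _")
proof -
  define B where "B = (1 + A*k^2) * al"
  define Lx where "Lx = - B * al1 / V"
  define Ly where "Ly = Bt - B * al * k"
  define G1 where "G1 = (-1 + A*k^2)/2 * al^2 / V"
  define G1d where "G1d = ((A*(2*k*k1))/2 * al^2 + (-1+A*k^2)/2 * (2*al*al1)) / V - (-1+A*k^2)/2*al^2 * V1 / V^2"
  define G2 where "G2 = A * M1 / V^2"
  define G2d where "G2d = A * M2 / V^2 - A * M1 * (2*V*V1) / V^4"
  define Rx where "Rx = G1d + G1 * V1 / V - G2 * k * V"
  define Ry where "Ry = G1 * k * V + G2d + G2 * V1 / V"
  have L: "?L = of_real Lx * P + of_real Ly * \<i> * P"
    unfolding Qd Lx_def Ly_def B_def using V
    by (simp add: complex_eq_iff) (simp add: field_simps power2_eq_square; simp add: algebra_simps)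
  have R: "?R = of_real Rx * P + of_real Ry * \<i> * P"
    unfolding Qd Rx_def Ry_def G1_def G1d_def G2_def G2d_def using V
    by (simp add: complex_eq_iff) (simp add: field_simps power2_eq_square power4_eq_xxxx; simp add: algebra_simps)
  have X: "Lx = Rx"
    unfolding Lx_def Rx_def B_def G1_def G1d_def G2_def G2d_def M1 using V
    by (simp add: field_simps power2_eq_square power4_eq_xxxx) (simp add: algebra_simps)?
  have Y0: "Ly - Ry = Bt - ((1 + 3*A*k^2)/2 * k * al^2 + A * (((M2 * V - M1 * V1)/V^2) / V))"
    unfolding Ly_def Ry_def B_def G1_def G1d_def G2_def G2d_def using V
    by (simp add: field_simps power2_eq_square power4_eq_xxxx) (simp add: algebra_simps)?
  have Y: "Ly = Ry \<longleftrightarrow> Bt = (1 + 3*A*k^2)/2 * k * al^2 + A * (((M2 * V - M1 * V1)/V^2) / V)"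
    using Y0 by linarith
  show ?thesis unfolding L R lincomb_eq[OF P] using X Y by simp
qed



lemma alg_part2:
  fixes P Q :: complex and al al1 V1 :: real
  assumes P: "P \<noteq> 0"
  shows "(Re P * Re (of_real ((al1 * norm P - al * V1) / norm P ^ 2) * \<i> * P + of_real (al / norm P) * \<i> * Q)
        + Im P * Im (of_real ((al1 * norm P - al * V1) / norm P ^ 2) * \<i> * P + of_real (al / norm P) * \<i> * Q)) / norm P
       = - al * (det2 P Q / norm P ^ 3) * norm P"
  using P by (simp add: det2_def field_simps power2_eq_square power3_eq_cube) (simp add: algebra_simps)?

lemma Dth_fun:
  assumes "(\<lambda>\<phi>. f t \<phi>) = g" "(g has_vector_derivative D) (at \<theta>)" "D = E"
  shows "Dth f t \<theta> = E"
  using assms by (simp add: Dth_def vector_derivative_at)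

lemma pointwise:
  fixes A t0 t1 :: real and c :: "real \<Rightarrow> real \<Rightarrow> complex" and a :: "real \<Rightarrow> real \<Rightarrow> real"
  assumes int: "t0 < t1"
    and smooth_c: "smooth_on_strip t0 t1 c"
    and immersion: "\<forall>t\<in>{t0..t1}. \<forall>\<theta>. Dth c t \<theta> \<noteq> 0"
    and smooth_a: "smooth_on_strip t0 t1 a"
    and a_def: "\<forall>t\<in>{t0..t1}. \<forall>\<theta>.
                  Dt t0 t1 c t \<theta> = complex_of_real (a t \<theta>) * \<i> * Dth c t \<theta> / complex_of_real (norm (Dth c t \<theta>))"
    and t: "t \<in> {t0..t1}"
  shows "(Dt t0 t1 (\<lambda>t \<theta>. complex_of_real ((1 + A * curv c t \<theta> ^ 2) * norm (Dth c t \<theta>)) * Dt t0 t1 c t \<theta>) t \<theta>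
           = Dth (\<lambda>t \<theta>.
                 complex_of_real ((-1 + A * curv c t \<theta> ^ 2) / 2 * norm (Dt t0 t1 c t \<theta>) ^ 2 / norm (Dth c t \<theta>)) * Dth c t \<theta>
               + complex_of_real (A * Dth (\<lambda>t \<theta>. curv c t \<theta> * norm (Dt t0 t1 c t \<theta>) ^ 2) t \<theta> / norm (Dth c t \<theta>) ^ 2)
                   * \<i> * Dth c t \<theta>) t \<theta>
         \<longleftrightarrow>
             Dt t0 t1 (\<lambda>t \<theta>. (1 + A * curv c t \<theta> ^ 2) * a t \<theta>) t \<theta>
           = (1 + 3 * A * curv c t \<theta> ^ 2) / 2 * curv c t \<theta> * a t \<theta> ^ 2
             + A * Ds c (Ds c (\<lambda>t \<theta>. curv c t \<theta> * a t \<theta> ^ 2)) t \<theta>)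
       \<and> Dt t0 t1 (\<lambda>t \<theta>. norm (Dth c t \<theta>)) t \<theta> = - a t \<theta> * curv c t \<theta> * norm (Dth c t \<theta>)"
proof -
  note rv = has_real_derivative_iff_has_vector_derivative
  have nz: "\<And>s \<phi>. s \<in> {t0..t1} \<Longrightarrow> Dth c s \<phi> \<noteq> 0" using immersion by auto
  have dP: "\<And>\<phi>. ((\<lambda>\<phi>. Dth c t \<phi>) has_vector_derivative Dth (Dth c) t \<phi>) (at \<phi>)"
    using dpart_th[OF smooth_c t, of "[False]"] by simp
  have dQ: "\<And>\<phi>. ((\<lambda>\<phi>. Dth (Dth c) t \<phi>) has_vector_derivative Dth (Dth (Dth c)) t \<phi>) (at \<phi>)"
    using dpart_th[OF smooth_c t, of "[False,False]"] by simp
  have dR: "\<And>\<phi>. ((\<lambda>\<phi>. Dth (Dth (Dth c)) t \<phi>) has_vector_derivative Dth (Dth (Dth (Dth c))) t \<phi>) (at \<phi>)"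
    using dpart_th[OF smooth_c t, of "[False,False,False]"] by simp
  have da: "\<And>\<phi>. ((\<lambda>\<phi>. a t \<phi>) has_real_derivative Dth a t \<phi>) (at \<phi>)"
    using dpart_th[OF smooth_a t, of "[]"] by (simp add: rv)
  have da1: "\<And>\<phi>. ((\<lambda>\<phi>. Dth a t \<phi>) has_real_derivative Dth (Dth a) t \<phi>) (at \<phi>)"
    using dpart_th[OF smooth_a t, of "[False]"] by (simp add: rv)
  have Vnz: "\<And>\<phi>. norm (Dth c t \<phi>) \<noteq> 0" using nz[OF t] by simp
  define V1 where "V1 \<phi> = (Re (Dth c t \<phi>) * Re (Dth (Dth c) t \<phi>) + Im (Dth c t \<phi>) * Im (Dth (Dth c) t \<phi>)) / norm (Dth c t \<phi>)" for \<phi>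
  have dV: "\<And>\<phi>. ((\<lambda>\<phi>. norm (Dth c t \<phi>)) has_real_derivative V1 \<phi>) (at \<phi>)"
    unfolding V1_def by (rule norm_deriv[OF dP nz[OF t]])
  define K1 where "K1 \<phi> = ((det2 (Dth (Dth c) t \<phi>) (Dth (Dth c) t \<phi>) + det2 (Dth c t \<phi>) (Dth (Dth (Dth c)) t \<phi>)) * norm (Dth c t \<phi>)
      - 3 * det2 (Dth c t \<phi>) (Dth (Dth c) t \<phi>) * V1 \<phi>) / norm (Dth c t \<phi>) ^ 4" for \<phi>
  have dk: "\<And>\<phi>. ((\<lambda>\<phi>. curv c t \<phi>) has_real_derivative K1 \<phi>) (at \<phi>)"
    unfolding curv_def K1_def V1_def by (rule curv_deriv[OF dP dQ nz[OF t]])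
  have "\<exists>D. (K1 has_real_derivative D) (at \<theta>)"
    unfolding K1_def V1_def
    by (rule exI) (rule derivative_intros det2_deriv norm_deriv dP dQ dR nz[OF t] | simp add: nz[OF t])+
  then obtain K2 where dK1: "(K1 has_real_derivative K2) (at \<theta>)" by blast
  define M1 where "M1 \<phi> = K1 \<phi> * a t \<phi> ^ 2 + curv c t \<phi> * (2 * a t \<phi> * Dth a t \<phi>)" for \<phi>
  have dm: "((\<lambda>\<phi>. curv c t \<phi> * a t \<phi> ^ 2) has_real_derivative M1 \<phi>) (at \<phi>)" for \<phi>
  proof -
    have "((\<lambda>\<phi>. curv c t \<phi> * a t \<phi> ^ 2) has_real_derivative K1 \<phi> * a t \<phi> ^ 2 + (of_nat 2 * (Dth a t \<phi> * a t \<phi> ^ (2 - Suc 0))) * curv c t \<phi>) (at \<phi>)"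
      by (rule DERIV_mult[OF dk DERIV_power[OF da]])
    then show ?thesis by (rule DERIV_cong) (simp add: M1_def algebra_simps)
  qed
  have Dthm: "\<And>\<phi>. Dth (\<lambda>t \<theta>. curv c t \<theta> * a t \<theta> ^ 2) t \<phi> = M1 \<phi>"
    unfolding Dth_def using dm by (simp add: vector_derivative_at rv)
  have "\<exists>D. (M1 has_real_derivative D) (at \<theta>)"
    unfolding M1_def by (rule exI) (rule derivative_intros dK1 dk da da1 | simp)+
  then obtain M2 where dM1: "(M1 has_real_derivative M2) (at \<theta>)" by blast
  have normct: "\<And>\<phi>. norm (Dt t0 t1 c t \<phi>) ^ 2 = a t \<phi> ^ 2"
    using a_def t Vnz by (simp add: norm_mult norm_divide)
  have Ctform: "\<And>\<phi>. Dt t0 t1 c t \<phi> = of_real (a t \<phi> / norm (Dth c t \<phi>)) * \<i> * Dth c t \<phi>"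
    using a_def t Vnz by (simp add: field_simps)
  define CT where "CT = of_real ((Dth a t \<theta> * norm (Dth c t \<theta>) - a t \<theta> * V1 \<theta>) / norm (Dth c t \<theta>) ^ 2) * \<i> * Dth c t \<theta>
       + of_real (a t \<theta> / norm (Dth c t \<theta>)) * \<i> * Dth (Dth c) t \<theta>"
  have dct: "((\<lambda>\<phi>. Dt t0 t1 c t \<phi>) has_vector_derivative CT) (at \<theta>)"
  proof -
    have e: "(\<lambda>\<phi>. Dt t0 t1 c t \<phi>) = (\<lambda>\<phi>. of_real (a t \<phi> / norm (Dth c t \<phi>)) * \<i> * Dth c t \<phi>)"
      using Ctform by auto
    have q0: "((\<lambda>\<phi>. a t \<phi> / norm (Dth c t \<phi>)) has_real_derivative (Dth a t \<theta> * norm (Dth c t \<theta>) - a t \<theta> * V1 \<theta>) / (norm (Dth c t \<theta>) * norm (Dth c t \<theta>))) (at \<theta>)"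
      by (rule DERIV_divide[OF da dV]) (simp add: nz[OF t])
    have q: "((\<lambda>\<phi>. a t \<phi> / norm (Dth c t \<phi>)) has_real_derivative (Dth a t \<theta> * norm (Dth c t \<theta>) - a t \<theta> * V1 \<theta>) / norm (Dth c t \<theta>) ^ 2) (at \<theta>)"
      using q0 by (simp add: power2_eq_square)
    have "((\<lambda>\<phi>. of_real (a t \<phi> / norm (Dth c t \<phi>)) * \<i> * Dth c t \<phi>) has_vector_derivative
       (of_real (a t \<theta> / norm (Dth c t \<theta>)) * \<i>) * Dth (Dth c) t \<theta> + (of_real ((Dth a t \<theta> * norm (Dth c t \<theta>) - a t \<theta> * V1 \<theta>) / norm (Dth c t \<theta>) ^ 2) * \<i>) * Dth c t \<theta>) (at \<theta>)"
      by (rule has_vector_derivative_mult[OF has_vector_derivative_mult_left[OF has_vector_derivative_of_real[OF q]] dP])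
    then show ?thesis unfolding e CT_def by (simp add: algebra_simps)
  qed
  have CTeq: "Dt t0 t1 (Dth c) t \<theta> = CT"
    unfolding schwarz[OF smooth_c int t] Dth_def using dct by (simp add: vector_derivative_at)
  have dPt: "((\<lambda>s. Dth c s \<theta>) has_vector_derivative CT) (at t within {t0..t1})"
    using dpart_t[OF smooth_c t, of "[False]" \<theta>] CTeq by simp
  have dQt: "((\<lambda>s. Dth (Dth c) s \<theta>) has_vector_derivative Dt t0 t1 (Dth (Dth c)) t \<theta>) (at t within {t0..t1})"
    using dpart_t[OF smooth_c t, of "[False,False]" \<theta>] by simp
  have dat: "((\<lambda>s. a s \<theta>) has_real_derivative Dt t0 t1 a t \<theta>) (at t within {t0..t1})"
    using dpart_t[OF smooth_a t, of "[]" \<theta>] by (simp add: rv)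
  have "\<exists>Kt. ((\<lambda>s. curv c s \<theta>) has_real_derivative Kt) (at t within {t0..t1})"
    using curv_deriv[OF dPt dQt nz[OF t]] unfolding curv_def by blast
  then obtain Kt where dkt: "((\<lambda>s. curv c s \<theta>) has_real_derivative Kt) (at t within {t0..t1})" by blast
  define Bf where "Bf s = (1 + A * curv c s \<theta> ^ 2) * a s \<theta>" for s
  have "\<exists>D. (Bf has_real_derivative D) (at t within {t0..t1})"
    unfolding Bf_def by (rule exI) (rule derivative_intros dkt dat)+
  then obtain Bd where dB: "(Bf has_real_derivative Bd) (at t within {t0..t1})" by blast
  have Bt_eq: "Dt t0 t1 (\<lambda>t \<theta>. (1 + A * curv c t \<theta> ^ 2) * a t \<theta>) t \<theta> = Bd"
    unfolding Dt_def by (rule vector_derivative_within_closed_interval[OF int t]) (use dB in \<open>simp add: rv Bf_def[abs_def]\<close>)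
  have dL: "((\<lambda>s. of_real (Bf s) * \<i> * Dth c s \<theta>) has_vector_derivative (of_real (Bf t) * \<i>) * CT + (of_real Bd * \<i>) * Dth c t \<theta>) (at t within {t0..t1})"
    by (rule has_vector_derivative_mult[OF has_vector_derivative_mult_left[OF has_vector_derivative_of_real[OF dB]] dPt])
  have Leq: "\<And>s. s \<in> {t0..t1} \<Longrightarrow> of_real ((1 + A * curv c s \<theta> ^ 2) * norm (Dth c s \<theta>)) * Dt t0 t1 c s \<theta> = of_real (Bf s) * \<i> * Dth c s \<theta>"
    using a_def nz by (simp add: Bf_def field_simps)
  have LHS0: "Dt t0 t1 (\<lambda>t \<theta>. complex_of_real ((1 + A * curv c t \<theta> ^ 2) * norm (Dth c t \<theta>)) * Dt t0 t1 c t \<theta>) t \<theta>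
     = (of_real (Bf t) * \<i>) * CT + (of_real Bd * \<i>) * Dth c t \<theta>"
    unfolding Dt_def by (rule vector_derivative_within_closed_interval[OF int t]) (rule has_vector_derivative_transform[OF t _ dL], erule Leq[unfolded Dt_def])
  have LHS: "Dt t0 t1 (\<lambda>t \<theta>. complex_of_real ((1 + A * curv c t \<theta> ^ 2) * norm (Dth c t \<theta>)) * Dt t0 t1 c t \<theta>) t \<theta>
     = of_real Bd * \<i> * Dth c t \<theta> + of_real ((1 + A * curv c t \<theta> ^ 2) * a t \<theta>) * \<i> * CT"
    unfolding LHS0 by (simp add: Bf_def algebra_simps)
  define G1 where "G1 \<phi> = (-1 + A * curv c t \<phi> ^ 2) / 2 * a t \<phi> ^ 2 / norm (Dth c t \<phi>)" for \<phi>
  define G2 where "G2 \<phi> = A * M1 \<phi> / norm (Dth c t \<phi>) ^ 2" for \<phi>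
  have Dthcta: "\<And>\<phi>. Dth (\<lambda>t \<theta>. curv c t \<theta> * norm (Dt t0 t1 c t \<theta>) ^ 2) t \<phi> = M1 \<phi>"
  proof -
    fix \<phi>
    have "(\<lambda>\<phi>. curv c t \<phi> * norm (Dt t0 t1 c t \<phi>) ^ 2) = (\<lambda>\<phi>. curv c t \<phi> * a t \<phi> ^ 2)"
      using normct by simp
    then show "Dth (\<lambda>t \<theta>. curv c t \<theta> * norm (Dt t0 t1 c t \<theta>) ^ 2) t \<phi> = M1 \<phi>"
      using Dthm[of \<phi>] unfolding Dth_def by simp
  qed
  have Rfun: "(\<lambda>\<phi>. complex_of_real ((-1 + A * curv c t \<phi> ^ 2) / 2 * norm (Dt t0 t1 c t \<phi>) ^ 2 / norm (Dth c t \<phi>)) * Dth c t \<phi>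
               + complex_of_real (A * Dth (\<lambda>t \<theta>. curv c t \<theta> * norm (Dt t0 t1 c t \<theta>) ^ 2) t \<phi> / norm (Dth c t \<phi>) ^ 2)
                   * \<i> * Dth c t \<phi>) = (\<lambda>\<phi>. of_real (G1 \<phi>) * Dth c t \<phi> + of_real (G2 \<phi>) * \<i> * Dth c t \<phi>)"
    by (simp only: G1_def G2_def normct Dthcta)
  define k where "k = curv c t \<theta>"
  define al where "al = a t \<theta>"
  define al1 where "al1 = Dth a t \<theta>"
  define V where "V = norm (Dth c t \<theta>)"
  have V0: "V \<noteq> 0" using Vnz by (simp add: V_def)
  define G1d where "G1d = ((A*(2*k*K1 \<theta>))/2 * al^2 + (-1+A*k^2)/2 * (2*al*al1)) / V - (-1+A*k^2)/2*al^2 * V1 \<theta> / V^2"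
  define G2d where "G2d = A * M2 / V^2 - A * M1 \<theta> * (2*V*V1 \<theta>) / V^4"
  have dG1: "(G1 has_real_derivative G1d) (at \<theta>)"
    unfolding G1_def[abs_def]
    apply (rule derivative_eq_intros dk da dV Vnz DERIV_const | simp)+
    using V0 by (simp_all add: G1d_def k_def al_def al1_def V_def field_simps power2_eq_square)
  have dG2: "(G2 has_real_derivative G2d) (at \<theta>)"
    unfolding G2_def[abs_def]
    apply (rule derivative_eq_intros dM1 dV Vnz DERIV_const | simp)+
    using V0 by (simp_all add: G2d_def V_def field_simps power2_eq_square power4_eq_xxxx)
  have dRf: "((\<lambda>\<phi>. of_real (G1 \<phi>) * Dth c t \<phi> + of_real (G2 \<phi>) * \<i> * Dth c t \<phi>) has_vector_derivative
      (of_real (G1 \<theta>) * Dth (Dth c) t \<theta> + of_real G1d * Dth c t \<theta>) + (of_real (G2 \<theta>) * \<i> * Dth (Dth c) t \<theta> + of_real G2d * \<i> * Dth c t \<theta>)) (at \<theta>)"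
    by (rule has_vector_derivative_add[OF has_vector_derivative_mult[OF has_vector_derivative_of_real[OF dG1] dP]
          has_vector_derivative_mult[OF has_vector_derivative_mult_left[OF has_vector_derivative_of_real[OF dG2]] dP]])
  have RHS: "Dth (\<lambda>t \<theta>.
                 complex_of_real ((-1 + A * curv c t \<theta> ^ 2) / 2 * norm (Dt t0 t1 c t \<theta>) ^ 2 / norm (Dth c t \<theta>)) * Dth c t \<theta>
               + complex_of_real (A * Dth (\<lambda>t \<theta>. curv c t \<theta> * norm (Dt t0 t1 c t \<theta>) ^ 2) t \<theta> / norm (Dth c t \<theta>) ^ 2)
                   * \<i> * Dth c t \<theta>) t \<theta>
     = of_real G1d * Dth c t \<theta> + of_real ((-1 + A*k^2)/2 * al^2 / V) * Dth (Dth c) t \<theta>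
          + of_real G2d * \<i> * Dth c t \<theta> + of_real (A * M1 \<theta> / V^2) * \<i> * Dth (Dth c) t \<theta>"
    apply (rule Dth_fun)
      apply (rule Rfun)
     apply (rule dRf)
    by (simp add: G1_def G2_def k_def al_def V_def algebra_simps)
  have DsDs: "Ds c (Ds c (\<lambda>t \<theta>. curv c t \<theta> * a t \<theta> ^ 2)) t \<theta> = ((M2 * V - M1 \<theta> * V1 \<theta>)/V^2) / V"
  proof -
    have e: "(\<lambda>\<phi>. Ds c (\<lambda>t \<theta>. curv c t \<theta> * a t \<theta> ^ 2) t \<phi>) = (\<lambda>\<phi>. M1 \<phi> / norm (Dth c t \<phi>))"
      by (simp add: Ds_def Dthm)
    have D: "((\<lambda>\<phi>. M1 \<phi> / norm (Dth c t \<phi>)) has_real_derivative (M2 * norm (Dth c t \<theta>) - M1 \<theta> * V1 \<theta>) / (norm (Dth c t \<theta>) * norm (Dth c t \<theta>))) (at \<theta>)"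
      by (rule DERIV_divide[OF dM1 dV]) (simp add: nz[OF t])
    have "Dth (Ds c (\<lambda>t \<theta>. curv c t \<theta> * a t \<theta> ^ 2)) t \<theta> = (M2 * V - M1 \<theta> * V1 \<theta>)/V^2"
      apply (rule Dth_fun)
        apply (rule e)
       apply (rule D[unfolded rv])
      by (simp add: V_def power2_eq_square)
    then show ?thesis
      by (simp add: Ds_def[of c "Ds c _"] V_def)
  qed
  have Qd: "Dth (Dth c) t \<theta> = of_real (V1 \<theta> / V) * Dth c t \<theta> + of_real (k * V) * \<i> * Dth c t \<theta>"
    using Qdecomp[OF nz[OF t], of "Dth (Dth c) t \<theta>"] by (simp add: V_def V1_def k_def curv_def)
  have M1eq: "M1 \<theta> = K1 \<theta> * al^2 + k * (2 * al * al1)" by (simp add: M1_def k_def al_def al1_def)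
  note eqv = alg_main[OF nz[OF t] V0 Qd M1eq, of Bd A M2]
  have p2: "Dt t0 t1 (\<lambda>t \<theta>. norm (Dth c t \<theta>)) t \<theta> = - a t \<theta> * curv c t \<theta> * norm (Dth c t \<theta>)"
  proof -
    have "((\<lambda>s. norm (Dth c s \<theta>)) has_real_derivative (Re (Dth c t \<theta>) * Re CT + Im (Dth c t \<theta>) * Im CT) / norm (Dth c t \<theta>)) (at t within {t0..t1})"
      by (rule norm_deriv[OF dPt nz[OF t]])
    then have "Dt t0 t1 (\<lambda>t \<theta>. norm (Dth c t \<theta>)) t \<theta> = (Re (Dth c t \<theta>) * Re CT + Im (Dth c t \<theta>) * Im CT) / norm (Dth c t \<theta>)"
      unfolding Dt_def by (intro vector_derivative_within_closed_interval[OF int t]) (simp add: rv)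
    also have "\<dots> = - a t \<theta> * (det2 (Dth c t \<theta>) (Dth (Dth c) t \<theta>) / norm (Dth c t \<theta>) ^ 3) * norm (Dth c t \<theta>)"
      unfolding CT_def by (rule alg_part2[OF nz[OF t]])
    finally show ?thesis by (simp add: curv_def)
  qed
  show ?thesis
    apply (rule conjI)
     apply (unfold LHS RHS Bt_eq DsDs)
     apply (unfold CT_def G1d_def G2d_def k_def[symmetric] al_def[symmetric] al1_def[symmetric] V_def[symmetric])
     apply (rule eqv)
    using p2 by (simp add: k_def al_def V_def)
qed


theorem mainTheorem16:
  fixes A t0 t1 :: real and c :: "real \<Rightarrow> real \<Rightarrow> complex" and a :: "real \<Rightarrow> real \<Rightarrow> real"
  assumes A: "A \<ge> 0"
    and int: "t0 < t1"
    and smooth_c: "smooth_on_strip t0 t1 c"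
    and per_c: "periodic_theta c"
    and immersion: "\<forall>t\<in>{t0..t1}. \<forall>\<theta>. Dth c t \<theta> \<noteq> 0"
    and horizontal: "\<forall>t\<in>{t0..t1}. \<forall>\<theta>. Dt t0 t1 c t \<theta> \<bullet> Dth c t \<theta> = 0"
    and smooth_a: "smooth_on_strip t0 t1 a"
    and a_def: "\<forall>t\<in>{t0..t1}. \<forall>\<theta>.
                  Dt t0 t1 c t \<theta> = complex_of_real (a t \<theta>) * \<i> * Dth c t \<theta> / complex_of_real (norm (Dth c t \<theta>))"
  shows "((\<forall>t\<in>{t0..t1}. \<forall>\<theta>.
             Dt t0 t1 (\<lambda>t \<theta>. complex_of_real ((1 + A * curv c t \<theta> ^ 2) * norm (Dth c t \<theta>)) * Dt t0 t1 c t \<theta>) t \<theta>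
           = Dth (\<lambda>t \<theta>.
                 complex_of_real ((-1 + A * curv c t \<theta> ^ 2) / 2 * norm (Dt t0 t1 c t \<theta>) ^ 2 / norm (Dth c t \<theta>)) * Dth c t \<theta>
               + complex_of_real (A * Dth (\<lambda>t \<theta>. curv c t \<theta> * norm (Dt t0 t1 c t \<theta>) ^ 2) t \<theta> / norm (Dth c t \<theta>) ^ 2)
                   * \<i> * Dth c t \<theta>) t \<theta>)
         \<longleftrightarrow>
         (\<forall>t\<in>{t0..t1}. \<forall>\<theta>.
             Dt t0 t1 (\<lambda>t \<theta>. (1 + A * curv c t \<theta> ^ 2) * a t \<theta>) t \<theta>
           = (1 + 3 * A * curv c t \<theta> ^ 2) / 2 * curv c t \<theta> * a t \<theta> ^ 2
             + A * Ds c (Ds c (\<lambda>t \<theta>. curv c t \<theta> * a t \<theta> ^ 2)) t \<theta>))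
       \<and> (\<forall>t\<in>{t0..t1}. \<forall>\<theta>.
             Dt t0 t1 (\<lambda>t \<theta>. norm (Dth c t \<theta>)) t \<theta> = - a t \<theta> * curv c t \<theta> * norm (Dth c t \<theta>))"
    using pointwise[OF int smooth_c immersion smooth_a a_def] by blast

end
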